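(* Let $M$ be a compact pointed metric space and assume that $\mathrm{lip}_0(M)$ is $1$-norming for $\mathcal F(M)$, so that $\mathcal F(M)$ is isometrically the dual of $\mathrm{lip}_0(M)$. Then $\mathcal F(M)$ is weak$^*$-asymptotically uniformly convex (with respect to the weak$^*$ topology $\sigma(\mathcal F(M),\mathrm{lip}_0(M))$).
   Context: A pointed metric space $M$ has a distinguished origin $0$. $\mathrm{Lip}_0(M)$ is the Banach space of real Lipschitz functions on $M$ vanishing at $0$ with the best Lipschitz constant as norm; $\delta(x)$ is evaluation at $x$, and the Lipschitz free space $\mathcal F(M)$ is the closed linear span of $\delta(M)$ in $\mathrm{Lip}_0(M)^*$. $\mathrm{lip}_0(M)=\{f\in\mathrm{Lip}_0(M): \lim_{\varepsilon\to0}\sup_{0<d(x,y)<\varepsilon}|f(x)-f(y)|/d(x,y)=0\}$; it is $1$-norming if $\|\mu\|=\sup\{\langle f,\mu\rangle: f\in\mathrm{lip}_0(M),\|f\|_L\le1\}$ for every $\mu\in\mathcal F(M)$. For a dual space $X^*$ of a separable Banach space $X$, the modulus of weak$^*$-asymptotic uniform convexity is $\overline\delta^*_{X^*}(t)=\inf_{x^*\in S_{X^*}}\inf\{\liminf_n\|x^*+x_n^*\|-1: (x_n^* )\subset X^*\ \text{weak}^*\text{-null},\ \|x_n^*\|\ge t\}$, and $X^*$ is weak$^*$-asymptotically uniformly convex if $\overline\delta^*_{X^*}(t)>0$ for every $t>0$. *)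

theory Defs
  imports "HOL-Analysis.Analysis"
begin

text \<open>Pointed metric space: a set M in a metric space type with base point z \<in> M.
  Functions are real functions, only their values on M matter.\<close>

definition Lip0 :: "'a::metric_space set \<Rightarrow> 'a \<Rightarrow> ('a \<Rightarrow> real) set" where
  "Lip0 M z = {f. f z = 0 \<and> (\<exists>C. lipschitz_on C M f)}"

definition lip_norm :: "'a::metric_space set \<Rightarrow> ('a \<Rightarrow> real) \<Rightarrow> real" where
  "lip_norm M f = Sup ({0} \<union> {\<bar>f x - f y\<bar> / dist x y | x y. x \<in> M \<and> y \<in> M \<and> x \<noteq> y})"

definition lip0 :: "'a::metric_space set \<Rightarrow> 'a \<Rightarrow> ('a \<Rightarrow> real) set" where
  "lip0 M z = {f \<in> Lip0 M z. \<forall>e>0. \<exists>\<epsilon>>0. \<forall>x\<in>M. \<forall>y\<in>M.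
      0 < dist x y \<and> dist x y < \<epsilon> \<longrightarrow> \<bar>f x - f y\<bar> \<le> e * dist x y}"

text \<open>Elements of Lip0(M)^* are represented as functionals on functions 'a => real
  (only their values on Lip0 M z are relevant). A finite linear combination of
  evaluations at points of M is given by a finitely supported coefficient function c.\<close>

definition molecule :: "'a set \<Rightarrow> ('a \<Rightarrow> real) \<Rightarrow> bool" where
  "molecule M c \<longleftrightarrow> finite {x. c x \<noteq> 0} \<and> {x. c x \<noteq> 0} \<subseteq> M"

definition mol_eval :: "('a \<Rightarrow> real) \<Rightarrow> ('a \<Rightarrow> real) \<Rightarrow> real" where
  "mol_eval c f = (\<Sum>x\<in>{x. c x \<noteq> 0}. c x * f x)"

text \<open>Free space: norm closure in Lip0(M)^* of span of delta(M).\<close>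
definition free_space :: "'a::metric_space set \<Rightarrow> 'a \<Rightarrow> (('a \<Rightarrow> real) \<Rightarrow> real) set" where
  "free_space M z = {\<mu>. \<forall>e>0. \<exists>c. molecule M c \<and>
      (\<forall>f\<in>Lip0 M z. lip_norm M f \<le> 1 \<longrightarrow> \<bar>\<mu> f - mol_eval c f\<bar> \<le> e)}"

definition fnorm :: "'a::metric_space set \<Rightarrow> 'a \<Rightarrow> (('a \<Rightarrow> real) \<Rightarrow> real) \<Rightarrow> real" where
  "fnorm M z \<mu> = Sup {\<mu> f | f. f \<in> Lip0 M z \<and> lip_norm M f \<le> 1}"

definition lip0_one_norming :: "'a::metric_space set \<Rightarrow> 'a \<Rightarrow> bool" where
  "lip0_one_norming M z \<longleftrightarrow> (\<forall>\<mu>\<in>free_space M z.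
      fnorm M z \<mu> = Sup {\<mu> f | f. f \<in> lip0 M z \<and> lip_norm M f \<le> 1})"

definition wstar_null :: "'a::metric_space set \<Rightarrow> 'a \<Rightarrow> (nat \<Rightarrow> ('a \<Rightarrow> real) \<Rightarrow> real) \<Rightarrow> bool" where
  "wstar_null M z \<nu> \<longleftrightarrow> (\<forall>f\<in>lip0 M z. (\<lambda>n. \<nu> n f) \<longlonglongrightarrow> 0)"

definition wstar_AUC_modulus :: "'a::metric_space set \<Rightarrow> 'a \<Rightarrow> real \<Rightarrow> ereal" where
  "wstar_AUC_modulus M z t = Inf {liminf (\<lambda>n. ereal (fnorm M z (\<lambda>f. \<mu> f + \<nu> n f))) - 1 | \<mu> \<nu>.
      \<mu> \<in> free_space M z \<and> fnorm M z \<mu> = 1 \<and> (\<forall>n. \<nu> n \<in> free_space M z) \<and>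
      wstar_null M z \<nu> \<and> (\<forall>n. fnorm M z (\<nu> n) \<ge> t)}"

definition wstar_AUC :: "'a::metric_space set \<Rightarrow> 'a \<Rightarrow> bool" where
  "wstar_AUC M z \<longleftrightarrow> (\<forall>t>0. wstar_AUC_modulus M z t > 0)"

end

theory Submission
  imports Defs
begin

lemma ball_bound:
  assumes "f \<in> Lip0 M z" "lip_norm M f \<le> 1" "x \<in> M" "y \<in> M"
  shows "\<bar>f x - f y\<bar> \<le> dist x y"
proof (cases "x = y")
  case True then show ?thesis by simp
next
  case False
  from assms(1) obtain C where C: "lipschitz_on C M f" unfolding Lip0_def by auto
  have bdd: "bdd_above ({0} \<union> {\<bar>f x - f y\<bar> / dist x y | x y. x \<in> M \<and> y \<in> M \<and> x \<noteq> y})"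
  proof (rule bdd_aboveI[where M="max 0 C"])
    fix r assume "r \<in> {0} \<union> {\<bar>f x - f y\<bar> / dist x y | x y. x \<in> M \<and> y \<in> M \<and> x \<noteq> y}"
    then show "r \<le> max 0 C"
    proof
      assume "r \<in> {0}" then show ?thesis by simp
    next
      assume "r \<in> {\<bar>f x - f y\<bar> / dist x y | x y. x \<in> M \<and> y \<in> M \<and> x \<noteq> y}"
      then obtain a b where ab: "r = \<bar>f a - f b\<bar> / dist a b" "a \<in> M" "b \<in> M" "a \<noteq> b" by auto
      have "\<bar>f a - f b\<bar> \<le> C * dist a b" using lipschitz_onD[OF C ab(2,3)] by (simp add: dist_real_def)
      then have "r \<le> C" using ab by (simp add: divide_le_eq)
      then show ?thesis by simp
    qed
  qed
  have "\<bar>f x - f y\<bar> / dist x y \<le> lip_norm M f"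
    unfolding lip_norm_def by (rule cSup_upper[OF _ bdd]) (use assms False in blast)
  then have "\<bar>f x - f y\<bar> / dist x y \<le> 1" using assms by linarith
  then show ?thesis using False by (simp add: divide_le_eq)
qed

lemma lip_norm_le1:
  assumes "\<And>x y. x \<in> M \<Longrightarrow> y \<in> M \<Longrightarrow> \<bar>f x - f y\<bar> \<le> dist x y"
  shows "lip_norm M f \<le> 1"
  unfolding lip_norm_def
proof (rule cSup_least)
  show "{0} \<union> {\<bar>f x - f y\<bar> / dist x y | x y. x \<in> M \<and> y \<in> M \<and> x \<noteq> y} \<noteq> {}" by simp
next
  fix r assume "r \<in> {0} \<union> {\<bar>f x - f y\<bar> / dist x y | x y. x \<in> M \<and> y \<in> M \<and> x \<noteq> y}"
  then show "r \<le> 1"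
  proof
    assume "r \<in> {0}" then show ?thesis by simp
  next
    assume "r \<in> {\<bar>f x - f y\<bar> / dist x y | x y. x \<in> M \<and> y \<in> M \<and> x \<noteq> y}"
    then obtain a b where ab: "r = \<bar>f a - f b\<bar> / dist a b" "a \<in> M" "b \<in> M" "a \<noteq> b" by auto
    then show ?thesis using assms[OF ab(2,3)] by (simp add: divide_le_eq)
  qed
qed

lemma Lip0_intro:
  assumes "f z = 0" "\<And>x y. x \<in> M \<Longrightarrow> y \<in> M \<Longrightarrow> \<bar>f x - f y\<bar> \<le> dist x y"
  shows "f \<in> Lip0 M z"
  unfolding Lip0_def using assms by (auto intro!: exI[of _ 1] lipschitz_onI simp: dist_real_def)

lemma mol_lin: "mol_eval c (\<lambda>x. a * f x + b * g x) = a * mol_eval c f + b * mol_eval c g"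
  unfolding mol_eval_def by (simp add: algebra_simps sum.distrib sum_distrib_left)

lemma mol_bound:
  assumes "molecule M c" "\<And>x. x \<in> M \<Longrightarrow> \<bar>w x\<bar> \<le> s"
  shows "\<bar>mol_eval c w\<bar> \<le> (\<Sum>x\<in>{x. c x \<noteq> 0}. \<bar>c x\<bar>) * s"
proof -
  have "\<bar>mol_eval c w\<bar> \<le> (\<Sum>x\<in>{x. c x \<noteq> 0}. \<bar>c x * w x\<bar>)"
    unfolding mol_eval_def by (rule sum_abs)
  also have "\<dots> \<le> (\<Sum>x\<in>{x. c x \<noteq> 0}. \<bar>c x\<bar> * s)"
    using assms unfolding molecule_def
    by (intro sum_mono) (auto simp: abs_mult intro!: mult_left_mono)
  finally show ?thesis by (simp add: sum_distrib_right)
qed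

lemma free_bdd:
  assumes "\<mu> \<in> free_space M z" "z \<in> M"
  shows "\<exists>B. \<forall>f. f \<in> Lip0 M z \<and> lip_norm M f \<le> 1 \<longrightarrow> \<bar>\<mu> f\<bar> \<le> B"
proof -
  obtain c where c: "molecule M c" "\<And>f. f\<in>Lip0 M z \<Longrightarrow> lip_norm M f \<le> 1 \<Longrightarrow> \<bar>\<mu> f - mol_eval c f\<bar> \<le> 1"
    using assms(1) unfolding free_space_def by (smt (verit) mem_Collect_eq)
  define D where "D = (\<Sum>x\<in>{x. c x \<noteq> 0}. dist x z)"
  have fin: "finite {x. c x \<noteq> 0}" using c(1) unfolding molecule_def by auto
  have "\<bar>\<mu> f\<bar> \<le> 1 + (\<Sum>x\<in>{x. c x \<noteq> 0}. \<bar>c x\<bar> * dist x z)"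
    if f: "f \<in> Lip0 M z" "lip_norm M f \<le> 1" for f
  proof -
    have fz: "f z = 0" using f unfolding Lip0_def by auto
    have "\<bar>mol_eval c f\<bar> \<le> (\<Sum>x\<in>{x. c x \<noteq> 0}. \<bar>c x * f x\<bar>)"
      unfolding mol_eval_def by (rule sum_abs)
    also have "\<dots> \<le> (\<Sum>x\<in>{x. c x \<noteq> 0}. \<bar>c x\<bar> * dist x z)"
    proof (intro sum_mono)
      fix x assume "x \<in> {x. c x \<noteq> 0}"
      then have "x \<in> M" using c(1) unfolding molecule_def by auto
      then have "\<bar>f x - f z\<bar> \<le> dist x z" using ball_bound[OF f] assms(2) by auto
      then show "\<bar>c x * f x\<bar> \<le> \<bar>c x\<bar> * dist x z" using fz by (simp add: abs_mult mult_left_mono)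
    qed
    finally show ?thesis using c(2)[OF f] by linarith
  qed
  then show ?thesis by blast
qed

lemma zero_lip0: "(\<lambda>x. 0) \<in> lip0 M z \<and> lip_norm M (\<lambda>x. 0) \<le> 1"
proof -
  have "(\<lambda>x. 0::real) \<in> Lip0 M z" by (rule Lip0_intro) auto
  moreover have "lip_norm M (\<lambda>x. 0::real) \<le> 1" by (rule lip_norm_le1) auto
  ultimately show ?thesis unfolding lip0_def by auto
qed

lemma lip0_Lip0: "f \<in> lip0 M z \<Longrightarrow> f \<in> Lip0 M z"
  unfolding lip0_def by auto

lemma sup_extract:
  assumes "\<mu> \<in> free_space M z" "z \<in> M" "y < Sup {\<mu> f | f. f \<in> lip0 M z \<and> lip_norm M f \<le> 1}"
  obtains f where "f \<in> lip0 M z" "lip_norm M f \<le> 1" "y < \<mu> f"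
proof -
  have "{\<mu> f | f. f \<in> lip0 M z \<and> lip_norm M f \<le> 1} \<noteq> {}" using zero_lip0 by blast
  from less_cSupE[OF assms(3) this] show ?thesis using that by blast
qed

lemma fnorm_lower:
  assumes "\<mu> \<in> free_space M z" "\<nu> \<in> free_space M z" "z \<in> M"
    "h \<in> Lip0 M z" "lip_norm M h \<le> 1"
  shows "\<mu> h + \<nu> h \<le> fnorm M z (\<lambda>f. \<mu> f + \<nu> f)"
proof -
  obtain B1 where B1: "\<And>f. f \<in> Lip0 M z \<Longrightarrow> lip_norm M f \<le> 1 \<Longrightarrow> \<bar>\<mu> f\<bar> \<le> B1"
    using free_bdd[OF assms(1,3)] by blast
  obtain B2 where B2: "\<And>f. f \<in> Lip0 M z \<Longrightarrow> lip_norm M f \<le> 1 \<Longrightarrow> \<bar>\<nu> f\<bar> \<le> B2"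
    using free_bdd[OF assms(2,3)] by blast
  have bdd: "bdd_above {\<mu> f + \<nu> f | f. f \<in> Lip0 M z \<and> lip_norm M f \<le> 1}"
    proof (rule bdd_aboveI[where M="B1+B2"])
    fix r assume "r \<in> {\<mu> f + \<nu> f | f. f \<in> Lip0 M z \<and> lip_norm M f \<le> 1}"
    then obtain f where "r = \<mu> f + \<nu> f" "f \<in> Lip0 M z" "lip_norm M f \<le> 1" by blast
    then show "r \<le> B1 + B2" using B1[of f] B2[of f] by linarith
  qed
  show ?thesis unfolding fnorm_def by (rule cSup_upper[OF _ bdd]) (use assms in blast)
qed

theorem proposition6p1:
  fixes M :: "'a::metric_space set" and z :: 'a
  assumes "compact M" and "z \<in> M"
    and "lip0_one_norming M z"
  shows "wstar_AUC M z"
  unfolding wstar_AUC_def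
proof (intro allI impI)
  fix t :: real assume t: "t > 0"
  define \<epsilon> where "\<epsilon> = min (1/2) (t/100)"
  have \<epsilon>pos: "\<epsilon> > 0" and \<epsilon>half: "\<epsilon> \<le> 1/2" and \<epsilon>t: "\<epsilon> \<le> t/100"
    using t unfolding \<epsilon>_def by auto
  have key: "ereal (1 + t/8) \<le> liminf (\<lambda>n. ereal (fnorm M z (\<lambda>f. \<mu> f + \<nu> n f)))"
    if \<mu>free: "\<mu> \<in> free_space M z" and \<mu>1: "fnorm M z \<mu> = 1"
      and \<nu>free: "\<And>n. \<nu> n \<in> free_space M z" and \<nu>null: "wstar_null M z \<nu>"
      and \<nu>t: "\<And>n. fnorm M z (\<nu> n) \<ge> t" for \<mu> \<nu>
  proof -
    obtain c\<mu> where c\<mu>: "molecule M c\<mu>"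
      "\<And>f. f\<in>Lip0 M z \<Longrightarrow> lip_norm M f \<le> 1 \<Longrightarrow> \<bar>\<mu> f - mol_eval c\<mu> f\<bar> \<le> \<epsilon>"
      using \<mu>free \<epsilon>pos unfolding free_space_def by (smt (verit) mem_Collect_eq)
    have "1 - \<epsilon> < Sup {\<mu> f | f. f \<in> lip0 M z \<and> lip_norm M f \<le> 1}"
      using assms(3) \<mu>free \<mu>1 \<epsilon>pos unfolding lip0_one_norming_def by auto
    then obtain f where f: "f \<in> lip0 M z" "lip_norm M f \<le> 1" "1 - \<epsilon> < \<mu> f"
      using sup_extract[OF \<mu>free assms(2)] by blast
    have fL: "f \<in> Lip0 M z" using f(1) by (rule lip0_Lip0)
    obtain \<eta> where \<eta>: "\<eta> > 0" "\<And>x y. x\<in>M \<Longrightarrow> y\<in>M \<Longrightarrow> 0 < dist x y \<Longrightarrow> dist x y < \<eta> \<Longrightarrow>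
        \<bar>f x - f y\<bar> \<le> \<epsilon> * dist x y"
      using f(1) \<epsilon>pos unfolding lip0_def by blast
    define A where "A = (\<Sum>x\<in>{x. c\<mu> x \<noteq> 0}. \<bar>c\<mu> x\<bar>)"
    have A0: "A \<ge> 0" unfolding A_def by (rule sum_nonneg) auto
    define s where "s = min (\<epsilon> * \<eta>) (\<epsilon> / (A + 1))"
    have spos: "s > 0" using \<epsilon>pos \<eta>(1) A0 unfolding s_def by auto
    have s1: "s \<le> \<epsilon> * \<eta>" unfolding s_def by auto
    have "A * s \<le> A * (\<epsilon> / (A + 1))" using A0 unfolding s_def by (intro mult_left_mono) auto
    also have "\<dots> \<le> \<epsilon>" using A0 \<epsilon>pos by (simp add: field_simps)
    finally have As: "A * s \<le> \<epsilon>" .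
    define \<rho> where "\<rho> = s / 3"
    have \<rho>pos: "\<rho> > 0" using spos unfolding \<rho>_def by auto
    obtain P where P: "P \<subseteq> M" "finite P" "M \<subseteq> (\<Union>p\<in>P. ball p \<rho>)"
    proof (rule compactE_image[OF assms(1), of M "\<lambda>p. ball p \<rho>"])
      show "M \<subseteq> (\<Union>p\<in>M. ball p \<rho>)" using \<rho>pos by auto
    qed auto
    have "\<forall>n. \<exists>g. g \<in> lip0 M z \<and> lip_norm M g \<le> 1 \<and> t - \<epsilon> < \<nu> n g"
    proof
      fix n
      have "t - \<epsilon> < Sup {\<nu> n f | f. f \<in> lip0 M z \<and> lip_norm M f \<le> 1}"
        using assms(3) \<nu>free[of n] \<nu>t[of n] \<epsilon>pos unfolding lip0_one_norming_def by auto
      then obtain g0 where "g0 \<in> lip0 M z" "lip_norm M g0 \<le> 1" "t - \<epsilon> < \<nu> n g0"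
        by (rule sup_extract[OF \<nu>free assms(2)])
      then show "\<exists>g. g \<in> lip0 M z \<and> lip_norm M g \<le> 1 \<and> t - \<epsilon> < \<nu> n g" by blast
    qed
    from choice[OF this] obtain g where gall: "\<forall>n. g n \<in> lip0 M z \<and> lip_norm M (g n) \<le> 1 \<and> t - \<epsilon> < \<nu> n (g n)"
      by blast
    have g: "\<And>n. g n \<in> lip0 M z" "\<And>n. lip_norm M (g n) \<le> 1" "\<And>n. t - \<epsilon> < \<nu> n (g n)"
      using gall by auto
    have gL: "\<And>n. g n \<in> Lip0 M z" using g(1) by (rule lip0_Lip0)
    have "\<forall>n. \<exists>c. molecule M c \<and> (\<forall>f. f\<in>Lip0 M z \<longrightarrow> lip_norm M f \<le> 1 \<longrightarrow> \<bar>\<nu> n f - mol_eval c f\<bar> \<le> \<epsilon>)"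
      using \<nu>free \<epsilon>pos unfolding free_space_def by blast
    from choice[OF this] obtain k where kall: "\<forall>n. molecule M (k n) \<and> (\<forall>f. f\<in>Lip0 M z \<longrightarrow> lip_norm M f \<le> 1 \<longrightarrow> \<bar>\<nu> n f - mol_eval (k n) f\<bar> \<le> \<epsilon>)"
      by blast
    have k: "\<And>n. molecule M (k n)"
      "\<And>n f. f\<in>Lip0 M z \<Longrightarrow> lip_norm M f \<le> 1 \<Longrightarrow> \<bar>\<nu> n f - mol_eval (k n) f\<bar> \<le> \<epsilon>"
      using kall by auto
    define D where "D = (\<Sum>p\<in>P. dist p z)"
    define K :: int where "K = \<lceil>D / \<rho>\<rceil> + 1"
    define cls where "cls n = (\<lambda>p. if p \<in> P then \<lfloor>g n p / \<rho>\<rfloor> else undefined)" for n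
    have cls_in: "cls n \<in> PiE P (\<lambda>_. {-K..K})" for n
    proof -
      have "\<lfloor>g n p / \<rho>\<rfloor> \<in> {-K..K}" if p: "p \<in> P" for p
      proof -
        have gz: "g n z = 0" using gL[of n] unfolding Lip0_def by auto
        have "\<bar>g n p - g n z\<bar> \<le> dist p z" using ball_bound[OF gL g(2)] p P(1) assms(2) by auto
        moreover have "dist p z \<le> D" unfolding D_def using p P(2)
          by (metis member_le_sum zero_le_dist)
        ultimately have "\<bar>g n p\<bar> \<le> D" using gz by simp
        then have "\<bar>g n p / \<rho>\<bar> \<le> D / \<rho>" using \<rho>pos by (simp add: divide_right_mono)
        then have x1: "- (D/\<rho>) \<le> g n p / \<rho>" "g n p / \<rho> \<le> D / \<rho>" by linarith+
        have c1: "of_int \<lfloor>g n p / \<rho>\<rfloor> \<le> g n p / \<rho>" "g n p / \<rho> < of_int \<lfloor>g n p / \<rho>\<rfloor> + 1"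
          "D / \<rho> \<le> of_int \<lceil>D / \<rho>\<rceil>" by (simp_all add: ceiling_correct)
        have "real_of_int (-K) < real_of_int \<lfloor>g n p / \<rho>\<rfloor> + 1"
          "real_of_int \<lfloor>g n p / \<rho>\<rfloor> \<le> real_of_int K"
          using x1 c1 unfolding K_def by (simp_all, linarith+)
        then have "-K \<le> \<lfloor>g n p / \<rho>\<rfloor>" "\<lfloor>g n p / \<rho>\<rfloor> \<le> K"
          by linarith+
        then show ?thesis by simp
      qed
      then show ?thesis unfolding cls_def by (intro PiE_I) auto
    qed
    define rep where "rep \<phi> = (SOME m. cls m = \<phi>)" for \<phi>
    define r where "r n = rep (cls n)" for n
    have clsr: "cls (r n) = cls n" for n unfolding r_def rep_def by (rule someI_ex) blast
    have finr: "finite (range r)"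
    proof (rule finite_subset)
      show "range r \<subseteq> rep ` (PiE P (\<lambda>_. {-K..K}))" using cls_in unfolding r_def by auto
      show "finite (rep ` (PiE P (\<lambda>_. {-K..K})))" using P(2) by (intro finite_imageI finite_PiE) auto
    qed
    have E1: "\<forall>\<^sub>F n in sequentially. \<bar>\<nu> n f\<bar> < \<epsilon>"
    proof -
      have "(\<lambda>n. \<nu> n f) \<longlonglongrightarrow> 0" using \<nu>null f(1) unfolding wstar_null_def by auto
      from order_tendstoD[OF tendsto_rabs[OF this]] \<epsilon>pos show ?thesis by simp
    qed
    have E2: "\<forall>\<^sub>F n in sequentially. \<forall>m\<in>range r. \<bar>\<nu> n (g m)\<bar> < \<epsilon>"
    proof (rule eventually_ball_finite[OF finr], rule ballI)
      fix m
      have "(\<lambda>n. \<nu> n (g m)) \<longlonglongrightarrow> 0" using \<nu>null g(1) unfolding wstar_null_def by auto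
      from order_tendstoD[OF tendsto_rabs[OF this]] \<epsilon>pos show "\<forall>\<^sub>F n in sequentially. \<bar>\<nu> n (g m)\<bar> < \<epsilon>" by simp
    qed
    have "\<forall>\<^sub>F n in sequentially. ereal (1 + t/8) \<le> ereal (fnorm M z (\<lambda>f. \<mu> f + \<nu> n f))"
    proof (rule eventually_mono[OF eventually_conj[OF E1 E2]])
      fix n assume H: "\<bar>\<nu> n f\<bar> < \<epsilon> \<and> (\<forall>m\<in>range r. \<bar>\<nu> n (g m)\<bar> < \<epsilon>)"
      define m where "m = r n"
      have gm: "\<bar>\<nu> n (g m)\<bar> < \<epsilon>" using H unfolding m_def by auto
      have \<nu>f: "\<bar>\<nu> n f\<bar> < \<epsilon>" using H by auto
      define w where "w = (\<lambda>x. g n x - g m x)"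
      have wP: "\<bar>w p\<bar> < \<rho>" if p: "p \<in> P" for p
      proof -
        have "\<lfloor>g n p / \<rho>\<rfloor> = \<lfloor>g m p / \<rho>\<rfloor>"
          using fun_cong[OF clsr[of n], of p] p unfolding cls_def m_def by auto
        then have "\<bar>g n p / \<rho> - g m p / \<rho>\<bar> < 1"
        proof -
          assume e: "\<lfloor>g n p / \<rho>\<rfloor> = \<lfloor>g m p / \<rho>\<rfloor>"
          define kk where "kk = real_of_int \<lfloor>g m p / \<rho>\<rfloor>"
          have "kk \<le> g n p / \<rho>" "g n p / \<rho> < kk + 1" "kk \<le> g m p / \<rho>" "g m p / \<rho> < kk + 1"
            using e unfolding kk_def by (metis floor_correct of_int_add of_int_1)+
          then show ?thesis by (simp add: abs_less_iff)
        qed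
        then have "\<bar>(g n p - g m p) / \<rho>\<bar> < 1" by (simp add: diff_divide_distrib)
        then show ?thesis using \<rho>pos unfolding w_def by (simp add: abs_divide divide_less_eq)
      qed
      have wM: "\<bar>w x\<bar> \<le> s" if x: "x \<in> M" for x
      proof -
        obtain p where p: "p \<in> P" "dist p x < \<rho>" using P(3) x by auto
        have pM: "p \<in> M" using p P(1) by auto
        have "\<bar>g n x - g n p\<bar> \<le> dist x p" by (rule ball_bound[OF gL g(2) x pM])
        moreover have "\<bar>g m x - g m p\<bar> \<le> dist x p" by (rule ball_bound[OF gL g(2) x pM])
        moreover note wP[OF p(1)]
        ultimately have "\<bar>w x\<bar> \<le> \<rho> + 2 * dist x p" unfolding w_def by linarith
        then show ?thesis using p(2) unfolding \<rho>_def by (simp add: dist_commute)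
      qed
      have wdiff: "\<bar>w x - w y\<bar> \<le> 2 * dist x y" if "x \<in> M" "y \<in> M" for x y
        using ball_bound[OF gL g(2) that, of n] ball_bound[OF gL g(2) that, of m] unfolding w_def by linarith
      define a where "a = 1 - \<epsilon>/2"
      have a: "a \<ge> 3/4" "a \<le> 1" using \<epsilon>half \<epsilon>pos unfolding a_def by auto
      define h where "h = (\<lambda>x. a * f x + (1/4) * w x)"
      have hdiff: "\<bar>h x - h y\<bar> \<le> dist x y" if x: "x \<in> M" and y: "y \<in> M" for x y
      proof -
        have e: "\<bar>h x - h y\<bar> \<le> a * \<bar>f x - f y\<bar> + (1/4) * \<bar>w x - w y\<bar>"
        proof -
          have "h x - h y = a * (f x - f y) + (1/4) * (w x - w y)" unfolding h_def right_diff_distrib by linarith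
          moreover have "\<bar>a * (f x - f y) + (1/4) * (w x - w y)\<bar> \<le> \<bar>a * (f x - f y)\<bar> + \<bar>(1/4) * (w x - w y)\<bar>"
            by (rule abs_triangle_ineq)
          moreover have "\<bar>a * (f x - f y)\<bar> = a * \<bar>f x - f y\<bar>" using a by (simp add: abs_mult)
          moreover have "\<bar>(1/4) * (w x - w y)\<bar> = (1/4) * \<bar>w x - w y\<bar>" by (simp add: abs_mult)
          ultimately show ?thesis by linarith
        qed
        show ?thesis
        proof (cases "dist x y < \<eta>")
          case True
          show ?thesis
          proof (cases "x = y")
            case True then show ?thesis by simp
          next
            case False
            then have "\<bar>f x - f y\<bar> \<le> \<epsilon> * dist x y" using \<eta>(2)[OF x y] True by auto
            then have "a * \<bar>f x - f y\<bar> \<le> a * (\<epsilon> * dist x y)" using a by (intro mult_left_mono) auto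
            also have "\<dots> \<le> 1 * (\<epsilon> * dist x y)" using a \<epsilon>pos by (intro mult_right_mono) auto
            also have "\<dots> \<le> (1/2) * dist x y" using \<epsilon>half mult_right_mono[of \<epsilon> "1/2" "dist x y"] by simp
            finally have f1: "a * \<bar>f x - f y\<bar> \<le> (1/2) * dist x y" .
            have w1: "(1/4) * \<bar>w x - w y\<bar> \<le> (1/2) * dist x y" using wdiff[OF x y] by simp
            show ?thesis using e f1 w1 by linarith
          qed
        next
          case False
          have "\<bar>f x - f y\<bar> \<le> dist x y" by (rule ball_bound[OF fL f(2) x y])
          then have "a * \<bar>f x - f y\<bar> \<le> a * dist x y" using a by (intro mult_left_mono) auto
          moreover have "\<bar>w x - w y\<bar> \<le> 2 * s" using wM[OF x] wM[OF y] by linarith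
          moreover have "s \<le> \<epsilon> * dist x y"
            using s1 mult_left_mono[of \<eta> "dist x y" \<epsilon>] False \<epsilon>pos by linarith
          ultimately have "a * \<bar>f x - f y\<bar> \<le> a * dist x y"
            "(1/4) * \<bar>w x - w y\<bar> \<le> (1/2) * (\<epsilon> * dist x y)" by simp_all
          then have "\<bar>h x - h y\<bar> \<le> a * dist x y + (1/2) * (\<epsilon> * dist x y)" using e by linarith
          also have "\<dots> = dist x y" unfolding a_def by (simp add: algebra_simps)
          finally show ?thesis .
        qed
      qed
      have hz: "h z = 0" using fL gL[of n] gL[of m] unfolding h_def w_def Lip0_def by auto
      have hL: "h \<in> Lip0 M z" by (rule Lip0_intro[OF hz hdiff])
      have hn: "lip_norm M h \<le> 1" by (rule lip_norm_le1[OF hdiff])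
      have mh: "mol_eval c (h) = a * mol_eval c f + (1/4) * (mol_eval c (g n) - mol_eval c (g m))" for c
      proof -
        have "mol_eval c w = 1 * mol_eval c (g n) + (-1) * mol_eval c (g m)"
          unfolding w_def by (subst mol_lin[symmetric]) simp
        moreover have "mol_eval c h = a * mol_eval c f + (1/4) * mol_eval c w"
          unfolding h_def by (rule mol_lin)
        ultimately show ?thesis by simp
      qed
      have m1: "mol_eval c\<mu> f > 1 - 2*\<epsilon>" using c\<mu>(2)[OF fL f(2)] f(3) by linarith
      have mw: "\<bar>mol_eval c\<mu> w\<bar> \<le> \<epsilon>"
      proof -
        have "\<bar>mol_eval c\<mu> w\<bar> \<le> A * s" unfolding A_def by (rule mol_bound[OF c\<mu>(1)]) (rule wM)
        then show ?thesis using As by linarith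
      qed
      have mw': "mol_eval c\<mu> w = mol_eval c\<mu> (g n) - mol_eval c\<mu> (g m)"
        unfolding w_def using mol_lin[of c\<mu> 1 "g n" "-1" "g m"] by simp
      have \<mu>h: "\<mu> h \<ge> a * (1 - 2*\<epsilon>) - \<epsilon>/4 - \<epsilon>"
      proof -
        have "a * (1 - 2*\<epsilon>) \<le> a * mol_eval c\<mu> f" using m1 a by (intro mult_left_mono) auto
        moreover have "(1/4) * (mol_eval c\<mu> (g n) - mol_eval c\<mu> (g m)) \<ge> - \<epsilon>/4"
          using mw mw' by (simp add: abs_le_iff)
        moreover have "\<mu> h \<ge> mol_eval c\<mu> h - \<epsilon>" using c\<mu>(2)[OF hL hn] by (simp add: abs_le_iff)
        ultimately show ?thesis using mh[of c\<mu>] by linarith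
      qed
      have k1: "mol_eval (k n) f > - 2*\<epsilon>" using k(2)[OF fL f(2), of n] \<nu>f by linarith
      have k2: "mol_eval (k n) (g n) > t - 2*\<epsilon>" using k(2)[OF gL g(2), of n n] g(3)[of n] by linarith
      have k3: "mol_eval (k n) (g m) < 2*\<epsilon>" using k(2)[OF gL g(2), of n m] gm by linarith
      have \<nu>h: "\<nu> n h \<ge> - 2*\<epsilon> + (1/4) * (t - 4*\<epsilon>) - \<epsilon>"
      proof -
        have "a * (- 2*\<epsilon>) \<le> a * mol_eval (k n) f" using k1 a by (intro mult_left_mono) auto
        moreover have "- 2*\<epsilon> \<le> a * (- 2*\<epsilon>)" using a \<epsilon>pos by (simp add: mult_le_cancel_right1)
        moreover have "(1/4) * (mol_eval (k n) (g n) - mol_eval (k n) (g m)) \<ge> (1/4) * (t - 4*\<epsilon>)"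
          using k2 k3 by (intro mult_left_mono) auto
        moreover have "\<nu> n h \<ge> mol_eval (k n) h - \<epsilon>" using k(2)[OF hL hn, of n] by (simp add: abs_le_iff)
        ultimately show ?thesis using mh[of "k n"] by linarith
      qed
      have "a * (1 - 2*\<epsilon>) \<ge> 1 - 5/2*\<epsilon>" unfolding a_def using \<epsilon>pos by (simp add: algebra_simps)
      moreover have "(1/4) * (t - 4*\<epsilon>) = t/4 - \<epsilon>" by simp
      ultimately have "1 + t/8 \<le> \<mu> h + \<nu> n h" using \<mu>h \<nu>h \<epsilon>t t by linarith
      also have "\<dots> \<le> fnorm M z (\<lambda>f. \<mu> f + \<nu> n f)" by (rule fnorm_lower[OF \<mu>free \<nu>free assms(2) hL hn])
      finally show "ereal (1 + t/8) \<le> ereal (fnorm M z (\<lambda>f. \<mu> f + \<nu> n f))" by simp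
    qed
    then show ?thesis by (rule Liminf_bounded)
  qed
  have "ereal (t/8) \<le> wstar_AUC_modulus M z t"
    unfolding wstar_AUC_modulus_def
  proof (rule Inf_greatest)
    fix x assume "x \<in> {liminf (\<lambda>n. ereal (fnorm M z (\<lambda>f. \<mu> f + \<nu> n f))) - 1 | \<mu> \<nu>.
      \<mu> \<in> free_space M z \<and> fnorm M z \<mu> = 1 \<and> (\<forall>n. \<nu> n \<in> free_space M z) \<and>
      wstar_null M z \<nu> \<and> (\<forall>n. fnorm M z (\<nu> n) \<ge> t)}"
    then obtain \<mu> \<nu> where x: "x = liminf (\<lambda>n. ereal (fnorm M z (\<lambda>f. \<mu> f + \<nu> n f))) - 1"
      and c: "\<mu> \<in> free_space M z" "fnorm M z \<mu> = 1" "\<forall>n. \<nu> n \<in> free_space M z"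
        "wstar_null M z \<nu>" "\<forall>n. fnorm M z (\<nu> n) \<ge> t" by blast
    have L: "ereal (1 + t/8) \<le> liminf (\<lambda>n. ereal (fnorm M z (\<lambda>f. \<mu> f + \<nu> n f)))"
      using key[of \<mu> \<nu>] c by blast
    define LL where "LL = liminf (\<lambda>n. ereal (fnorm M z (\<lambda>f. \<mu> f + \<nu> n f)))"
    have L': "ereal (1 + t/8) \<le> LL" using L unfolding LL_def .
    have "ereal (t/8) \<le> LL - 1"
    proof (cases LL)
      case (real r)
      have "ereal r - 1 = ereal r - ereal 1" by (simp only: one_ereal_def)
      also have "\<dots> = ereal (r - 1)" by (rule ereal_minus(1))
      finally have e: "ereal r - 1 = ereal (r - 1)" .
      have r1: "1 + t/8 \<le> r" using L' unfolding real by simp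
      have "ereal (t/8) \<le> ereal (r - 1)" using r1 by simp
      then show ?thesis using e real by (simp only:)
    next
      case PInf then show ?thesis by simp
    next
      case MInf then show ?thesis using L' by simp
    qed
    then show "ereal (t/8) \<le> x" unfolding x LL_def .
  qed
  moreover have "ereal (t/8) > 0" using t by simp
  ultimately show "wstar_AUC_modulus M z t > 0" by (rule less_le_trans[rotated])
qed

end
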